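(* For the path $P_n$ on $n\ge 2$ vertices, $b_{OCD}(P_n)=1$ if $n=2$, $b_{OCD}(P_n)=2$ if $n=3$, and $b_{OCD}(P_n)=\lceil n/3\rceil-1$ if $n\ge 4$.
   Context: A set $S\subseteq V$ is a dominating set of a graph $G=(V,E)$ if every vertex not in $S$ is adjacent to a vertex of $S$. A set $\tilde D\subseteq V$ is an outer-connected dominating set of $G$ if $\tilde D$ is dominating and the induced subgraph $G[V\setminus\tilde D]$ is connected (the empty graph counts as connected). $\tilde\gamma_c(G)$ is the minimum size of an outer-connected dominating set. For a graph $G$ without isolated vertices, the outer-connected bondage number $b_{OCD}(G)$ is the minimum number of edges whose removal from $G$ yields a graph $G'$ with $\tilde\gamma_c(G')>\tilde\gamma_c(G)$. *)

theory Defs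
  imports Complex_Main
begin

text \<open>A finite simple graph is given by a vertex set V and an edge set E of
  two-element subsets of V.  Edge removal yields (V, E - F).\<close>

definition dominating :: "'a set \<Rightarrow> 'a set set \<Rightarrow> 'a set \<Rightarrow> bool" where
  "dominating V E S \<longleftrightarrow> S \<subseteq> V \<and> (\<forall>v \<in> V - S. \<exists>u \<in> S. {u, v} \<in> E)"

text \<open>The induced subgraph G[W] is connected (the empty graph counts as connected).\<close>
definition induced_connected :: "'a set set \<Rightarrow> 'a set \<Rightarrow> bool" where
  "induced_connected E W \<longleftrightarrow>
     (\<forall>x \<in> W. \<forall>y \<in> W. (\<lambda>a b. a \<in> W \<and> b \<in> W \<and> {a, b} \<in> E)\<^sup>*\<^sup>* x y)"

definition outer_connected_dominating :: "'a set \<Rightarrow> 'a set set \<Rightarrow> 'a set \<Rightarrow> bool" where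
  "outer_connected_dominating V E D \<longleftrightarrow> dominating V E D \<and> induced_connected E (V - D)"

definition gamma_oc :: "'a set \<Rightarrow> 'a set set \<Rightarrow> nat" where
  "gamma_oc V E = (LEAST k. \<exists>D. outer_connected_dominating V E D \<and> card D = k)"

definition b_OCD :: "'a set \<Rightarrow> 'a set set \<Rightarrow> nat" where
  "b_OCD V E = (LEAST k. \<exists>F. F \<subseteq> E \<and> card F = k \<and> gamma_oc V (E - F) > gamma_oc V E)"

definition path_V :: "nat \<Rightarrow> nat set" where
  "path_V n = {0..<n}"

definition path_E :: "nat \<Rightarrow> nat set set" where
  "path_E n = {{i, Suc i} | i. Suc i < n}"

end

theory Submission
  imports Defs
begin

lemma pE_mem: "e \<in> path_E n \<Longrightarrow> \<exists>i. e = {i, Suc i} \<and> Suc i < n"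
  unfolding path_E_def by auto

lemma pE_pair: "{a,b} \<in> path_E n \<Longrightarrow> (b = Suc a \<or> a = Suc b) \<and> a < n \<and> b < n"
  unfolding path_E_def by (auto simp: doubleton_eq_iff)

lemma pE_in: "Suc i < n \<Longrightarrow> {i, Suc i} \<in> path_E n"
  unfolding path_E_def by auto

lemma finite_pE: "finite (path_E n)"
proof -
  have "path_E n \<subseteq> Pow {0..<n}" unfolding path_E_def by auto
  thus ?thesis by (rule finite_subset) simp
qed

lemma conn_interval:
  assumes sub: "E' \<subseteq> path_E n"
    and r: "(\<lambda>a b. a \<in> W \<and> b \<in> W \<and> {a,b} \<in> E')\<^sup>*\<^sup>* x y" and x: "x \<in> W"
  shows "(\<forall>z. min x y \<le> z \<and> z \<le> max x y \<longrightarrow> z \<in> W) \<and>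
         (\<forall>z. min x y \<le> z \<and> z < max x y \<longrightarrow> {z, Suc z} \<in> E')"
  using r
proof (induction rule: rtranclp_induct)
  case base then show ?case using x by auto
next
  case (step y y')
  have yy: "y' = Suc y \<or> y = Suc y'" using step(2) sub pE_pair by blast
  from step(2) have W: "y \<in> W" "y' \<in> W" and e: "{y,y'} \<in> E'" by auto
  from yy show ?case
  proof
    assume h: "y' = Suc y"
    show ?thesis
    proof (cases "x \<le> y")
      case True
      show ?thesis
      proof (intro conjI allI impI)
        fix z assume "min x y' \<le> z \<and> z \<le> max x y'"
        then have "z = y' \<or> (min x y \<le> z \<and> z \<le> max x y)" using True h by auto
        then show "z \<in> W" using step.IH W by auto
      next
        fix z assume "min x y' \<le> z \<and> z < max x y'"
        then have "z = y \<or> (min x y \<le> z \<and> z < max x y)" using True h by auto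
        then show "{z, Suc z} \<in> E'" using step.IH e h by auto
      qed
    next
      case False
      then show ?thesis using step.IH h by auto
    qed
  next
    assume h: "y = Suc y'"
    show ?thesis
    proof (cases "y \<le> x")
      case True
      have e2: "{y', Suc y'} \<in> E'" using e h by (simp add: insert_commute)
      show ?thesis
      proof (intro conjI allI impI)
        fix z assume "min x y' \<le> z \<and> z \<le> max x y'"
        then have "z = y' \<or> (min x y \<le> z \<and> z \<le> max x y)" using True h by auto
        then show "z \<in> W" using step.IH W by auto
      next
        fix z assume "min x y' \<le> z \<and> z < max x y'"
        then have "z = y' \<or> (min x y \<le> z \<and> z < max x y)" using True h by auto
        then show "{z, Suc z} \<in> E'" using step.IH e2 by auto
      qed
    next
      case False
      then show ?thesis using step.IH h by auto
    qed
  qed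
qed

lemma ocd_W:
  assumes sub: "E' \<subseteq> path_E n" and ocd: "outer_connected_dominating (path_V n) E' D"
  shows "card (path_V n - D) \<le> 2"
    "card (path_V n - D) = 2 \<Longrightarrow> \<exists>j. {j,Suc j}\<in>E' \<and> {Suc j, Suc (Suc j)} \<in> E' \<and> {Suc (Suc j), Suc(Suc(Suc j))} \<in> E'"
    "card (path_V n - D) = 1 \<Longrightarrow> E' \<noteq> {}"
proof -
  define W where "W = path_V n - D"
  have dm: "dominating (path_V n) E' D" and ic: "induced_connected E' W"
    using ocd unfolding outer_connected_dominating_def W_def by simp_all
  have dom: "\<forall>v\<in>W. \<exists>u\<in>D. {u,v}\<in>E'"
    using dm unfolding dominating_def W_def by blast
  have conn: "\<forall>x\<in>W. \<forall>y\<in>W. (\<lambda>a b. a \<in> W \<and> b \<in> W \<and> {a,b} \<in> E')\<^sup>*\<^sup>* x y"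
    using ic unfolding induced_connected_def by blast
  have WD: "W \<inter> D = {}" unfolding W_def by blast
  have iv: "\<And>a c. a \<in> W \<Longrightarrow> c \<in> W \<Longrightarrow> a \<le> c \<Longrightarrow>
      (\<forall>z. a \<le> z \<and> z \<le> c \<longrightarrow> z \<in> W) \<and> (\<forall>z. a \<le> z \<and> z < c \<longrightarrow> {z, Suc z} \<in> E')"
  proof -
    fix a c assume ac: "a \<in> W" "c \<in> W" "a \<le> c"
    have "(\<lambda>a b. a \<in> W \<and> b \<in> W \<and> {a,b} \<in> E')\<^sup>*\<^sup>* a c" using conn ac(1,2) by blast
    from conn_interval[OF sub this ac(1)]
    show "(\<forall>z. a \<le> z \<and> z \<le> c \<longrightarrow> z \<in> W) \<and> (\<forall>z. a \<le> z \<and> z < c \<longrightarrow> {z, Suc z} \<in> E')"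
      using ac(3) by (simp add: min_absorb1 max_absorb2)
  qed
  have mid: "\<And>a b c. a \<in> W \<Longrightarrow> c \<in> W \<Longrightarrow> a < b \<Longrightarrow> b < c \<Longrightarrow> False"
  proof -
    fix a b c assume a: "a \<in> W" and c: "c \<in> W" and ab: "a < b" and bc: "b < c"
    have allW: "\<forall>z. a \<le> z \<and> z \<le> c \<longrightarrow> z \<in> W" using iv[OF a c] ab bc by auto
    then have "b \<in> W" using ab bc by auto
    then obtain u where u: "u \<in> D" "{u,b} \<in> E'" using dom by auto
    then have "b = Suc u \<or> u = Suc b" using sub pE_pair by blast
    then have "u \<in> W" using allW ab bc by auto
    then show False using u WD by auto
  qed
  have fin: "finite W" unfolding W_def path_V_def by auto
  show "card (path_V n - D) \<le> 2"
  proof (rule ccontr)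
    assume "\<not> card (path_V n - D) \<le> 2"
    then have c3: "card W \<ge> 3" unfolding W_def by simp
    then have ne: "W \<noteq> {}" by auto
    define a where "a = Min W"
    define c where "c = Max W"
    have "W - {a,c} \<noteq> {}"
    proof
      assume "W - {a,c} = {}"
      then have "W \<subseteq> {a,c}" by auto
      then have "card W \<le> card {a,c}" by (rule card_mono[rotated]) simp
      also have "\<dots> \<le> 2" by (simp add: card_insert_if)
      finally show False using c3 by simp
    qed
    then obtain b where b: "b \<in> W" "b \<noteq> a" "b \<noteq> c" by auto
    have "a \<le> b" "b \<le> c" using b fin unfolding a_def c_def by auto
    moreover have "a \<in> W" "c \<in> W" using fin ne unfolding a_def c_def by auto
    ultimately show False using mid b by (metis le_neq_implies_less)
  qed
  show "\<exists>j. {j,Suc j}\<in>E' \<and> {Suc j, Suc (Suc j)} \<in> E' \<and> {Suc (Suc j), Suc(Suc(Suc j))} \<in> E'"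
    if h2: "card (path_V n - D) = 2"
  proof -
    obtain x y where xy: "W = {x,y}" "x \<noteq> y" using h2 unfolding W_def card_2_iff by auto
    obtain a c where ac: "W = {a,c}" "a < c"
    proof (cases "x < y")
      case True then show ?thesis using that xy by auto
    next
      case False then show ?thesis using that[of y x] xy by (auto simp: insert_commute)
    qed
    have aW: "a \<in> W" and cW: "c \<in> W" using ac by auto
    have csuc: "c = Suc a"
    proof (rule ccontr)
      assume "c \<noteq> Suc a"
      then have "Suc a < c" using ac by auto
      then show False using mid[OF aW cW, of "Suc a"] by auto
    qed
    have e1: "{a, Suc a} \<in> E'" using iv[OF aW cW] ac csuc by auto
    obtain u where u: "u \<in> D" "{u,a} \<in> E'" using dom aW by auto
    have "a = Suc u \<or> u = Suc a" using u sub pE_pair by blast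
    moreover have "u \<noteq> Suc a" using u WD cW csuc by auto
    ultimately have au: "a = Suc u" by auto
    obtain u' where u': "u' \<in> D" "{u',c} \<in> E'" using dom cW by auto
    have "c = Suc u' \<or> u' = Suc c" using u' sub pE_pair by blast
    moreover have "u' \<noteq> a" using u' WD aW by auto
    ultimately have cu: "u' = Suc c" using csuc by auto
    show ?thesis
      using u(2) e1 u'(2) au cu csuc by (intro exI[of _ u]) (auto simp: insert_commute)
  qed
  show "E' \<noteq> {}" if h1: "card (path_V n - D) = 1"
  proof -
    have "card W = 1" using h1 unfolding W_def .
    then obtain v where "W = {v}" by (rule card_1_singletonE)
    then have "v \<in> W" by simp
    then obtain u where "{u,v} \<in> E'" using dom by blast
    then show ?thesis by blast
  qed
qed

lemma card_pV: "card (path_V n) = n" unfolding path_V_def by simp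

lemma ocd_card:
  assumes sub: "E' \<subseteq> path_E n" and ocd: "outer_connected_dominating (path_V n) E' D"
  shows "n \<le> card D + 2"
    "\<not>(\<exists>j. {j,Suc j}\<in>E' \<and> {Suc j, Suc (Suc j)} \<in> E' \<and> {Suc (Suc j), Suc(Suc(Suc j))} \<in> E')
       \<Longrightarrow> n \<le> card D + 1"
    "E' = {} \<Longrightarrow> n \<le> card D"
proof -
  have DV: "D \<subseteq> path_V n" using ocd unfolding outer_connected_dominating_def dominating_def by auto
  have fD: "finite D" using DV unfolding path_V_def using finite_subset by auto
  have cw: "card (path_V n - D) = n - card D" using card_Diff_subset[OF fD DV] card_pV by simp
  have cD: "card D \<le> n" using card_mono[OF _ DV] card_pV unfolding path_V_def by auto
  note w = ocd_W[OF sub ocd]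
  show "n \<le> card D + 2" using w(1) cw cD by simp
  show "n \<le> card D + 1" if "\<not>(\<exists>j. {j,Suc j}\<in>E' \<and> {Suc j, Suc (Suc j)} \<in> E' \<and> {Suc (Suc j), Suc(Suc(Suc j))} \<in> E')"
  proof -
    have "card (path_V n - D) \<noteq> 2" using w(2) that by blast
    then show ?thesis using w(1) cw cD by linarith
  qed
  show "n \<le> card D" if "E' = {}"
  proof -
    have "card (path_V n - D) \<noteq> 2" using w(2) that by blast
    moreover have "card (path_V n - D) \<noteq> 1" using w(3) that by blast
    ultimately show ?thesis using w(1) cw cD by linarith
  qed
qed

lemma ocd_V: "outer_connected_dominating V E V"
  by (simp add: outer_connected_dominating_def dominating_def induced_connected_def)

lemma gamma_le: "outer_connected_dominating V E D \<Longrightarrow> gamma_oc V E \<le> card D"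
  unfolding gamma_oc_def by (auto intro!: Least_le)

lemma gamma_ex: "\<exists>D. outer_connected_dominating V E D \<and> card D = gamma_oc V E"
  unfolding gamma_oc_def by (rule LeastI_ex) (use ocd_V in blast)

lemma gamma_ge: "(\<And>D. outer_connected_dominating V E D \<Longrightarrow> k \<le> card D) \<Longrightarrow> k \<le> gamma_oc V E"
proof -
  assume a: "\<And>D. outer_connected_dominating V E D \<Longrightarrow> k \<le> card D"
  obtain D where "outer_connected_dominating V E D" "card D = gamma_oc V E" using gamma_ex by blast
  then show ?thesis using a by metis
qed

lemma b_le: "F \<subseteq> E \<Longrightarrow> gamma_oc V (E-F) > gamma_oc V E \<Longrightarrow> b_OCD V E \<le> card F"
  unfolding b_OCD_def by (auto intro!: Least_le)

lemma b_ge: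
  assumes "F0 \<subseteq> E" "gamma_oc V (E-F0) > gamma_oc V E"
    and "\<And>F. F \<subseteq> E \<Longrightarrow> gamma_oc V (E-F) > gamma_oc V E \<Longrightarrow> k \<le> card F"
  shows "k \<le> b_OCD V E"
proof -
  have "\<exists>F. F \<subseteq> E \<and> card F = b_OCD V E \<and> gamma_oc V (E - F) > gamma_oc V E"
    unfolding b_OCD_def by (rule LeastI_ex) (use assms(1,2) in blast)
  then obtain F where "F \<subseteq> E" "card F = b_OCD V E" "gamma_oc V (E - F) > gamma_oc V E" by blast
  then show ?thesis using assms(3) by metis
qed

lemma gamma_lower:
  assumes "E' \<subseteq> path_E n"
  shows "n \<le> gamma_oc (path_V n) E' + 2"
    "\<not>(\<exists>j. {j,Suc j}\<in>E' \<and> {Suc j, Suc (Suc j)} \<in> E' \<and> {Suc (Suc j), Suc(Suc(Suc j))} \<in> E')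
       \<Longrightarrow> n \<le> gamma_oc (path_V n) E' + 1"
    "E' = {} \<Longrightarrow> n \<le> gamma_oc (path_V n) E'"
  using ocd_card[OF assms] gamma_ex[of "path_V n" E'] by force+

lemma gamma_triple:
  assumes sub: "E' \<subseteq> path_E n"
    and t: "{j,Suc j}\<in>E'" "{Suc j, Suc (Suc j)} \<in> E'" "{Suc (Suc j), Suc(Suc(Suc j))} \<in> E'"
  shows "gamma_oc (path_V n) E' + 2 \<le> n"
proof -
  have lt: "Suc (Suc (Suc j)) < n" using t(3) sub pE_pair by blast
  define D where "D = path_V n - {Suc j, Suc (Suc j)}"
  have W: "path_V n - D = {Suc j, Suc (Suc j)}" unfolding D_def path_V_def using lt by auto
  have "outer_connected_dominating (path_V n) E' D"
    unfolding outer_connected_dominating_def dominating_def induced_connected_def W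
  proof (intro conjI ballI)
    show "D \<subseteq> path_V n" unfolding D_def by auto
  next
    fix v assume "v \<in> {Suc j, Suc (Suc j)}"
    moreover have "j \<in> D" "Suc (Suc (Suc j)) \<in> D" unfolding D_def path_V_def using lt by auto
    moreover have "{Suc (Suc (Suc j)), Suc (Suc j)} \<in> E'" using t(3) by (simp add: insert_commute)
    ultimately show "\<exists>u\<in>D. {u, v} \<in> E'" using t by blast
  next
    fix x y assume xy: "x \<in> {Suc j, Suc (Suc j)}" "y \<in> {Suc j, Suc (Suc j)}"
    let ?R = "\<lambda>a b. a \<in> {Suc j, Suc (Suc j)} \<and> b \<in> {Suc j, Suc (Suc j)} \<and> {a, b} \<in> E'"
    have "?R (Suc j) (Suc (Suc j))" "?R (Suc (Suc j)) (Suc j)" using t by (auto simp: insert_commute)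
    then show "?R\<^sup>*\<^sup>* x y" using xy by auto
  qed
  then have "gamma_oc (path_V n) E' \<le> card D" by (rule gamma_le)
  moreover have "card D = n - 2" unfolding D_def using lt card_pV[of n]
    by (simp add: path_V_def card_Diff_subset)
  ultimately show ?thesis using lt by simp
qed

lemma gamma_edge:
  assumes sub: "E' \<subseteq> path_E n" and e: "{i, Suc i} \<in> E'"
  shows "gamma_oc (path_V n) E' + 1 \<le> n"
proof -
  have lt: "Suc i < n" using e sub pE_pair by blast
  define D where "D = path_V n - {i}"
  have W: "path_V n - D = {i}" unfolding D_def path_V_def using lt by auto
  have "outer_connected_dominating (path_V n) E' D"
    unfolding outer_connected_dominating_def dominating_def induced_connected_def W
  proof (intro conjI ballI)
    show "D \<subseteq> path_V n" unfolding D_def by auto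
  next
    fix v assume "v \<in> {i}"
    moreover have "Suc i \<in> D" unfolding D_def path_V_def using lt by auto
    ultimately show "\<exists>u\<in>D. {u, v} \<in> E'" using e by (auto simp: insert_commute)
  next
    fix x y assume xy: "x \<in> {i}" "y \<in> {i}"
    then show "(\<lambda>a b. a \<in> {i} \<and> b \<in> {i} \<and> {a, b} \<in> E')\<^sup>*\<^sup>* x y" by auto
  qed
  then have "gamma_oc (path_V n) E' \<le> card D" by (rule gamma_le)
  moreover have "card D = n - 1" unfolding D_def using lt card_pV[of n]
    by (simp add: path_V_def card_Diff_subset)
  ultimately show ?thesis using lt by simp
qed


lemma no_triple_small:
  assumes "E' \<subseteq> path_E n" "n \<le> 3"
  shows "\<not>(\<exists>j. {j,Suc j}\<in>E' \<and> {Suc j, Suc (Suc j)} \<in> E' \<and> {Suc (Suc j), Suc(Suc(Suc j))} \<in> E')"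
proof
  assume "\<exists>j. {j,Suc j}\<in>E' \<and> {Suc j, Suc (Suc j)} \<in> E' \<and> {Suc (Suc j), Suc(Suc(Suc j))} \<in> E'"
  then obtain j where "{Suc (Suc j), Suc(Suc(Suc j))} \<in> path_E n" using assms(1) by blast
  then have "Suc(Suc(Suc j)) < n" using pE_pair by blast
  then show False using assms(2) by simp
qed

lemma ceil_lemma:
  assumes "n \<ge> (1::nat)"
  shows "\<lceil>real n / 3\<rceil> - 1 = int ((n - 1) div 3)"
proof -
  define q where "q = (n - 1) div 3"
  define r where "r = (n - 1) mod 3"
  have nq: "n = 3 * q + r + 1" "r < 3" unfolding q_def r_def using assms by auto
  have "\<lceil>real n / 3\<rceil> = int q + 1"
  proof (rule ceiling_unique)
    have "real n = 3 * real q + real r + 1" using nq(1) by simp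
    moreover have "real r \<le> 2" using nq(2) by simp
    ultimately show "of_int (int q + 1) - 1 < real n / 3" "real n / 3 \<le> of_int (int q + 1)"
      by (auto simp: field_simps)
  qed
  then show ?thesis unfolding q_def by simp
qed

theorem mainTheorem10:
  fixes n :: nat
  assumes "n \<ge> 2"
  shows "(n = 2 \<longrightarrow> b_OCD (path_V n) (path_E n) = 1)
       \<and> (n = 3 \<longrightarrow> b_OCD (path_V n) (path_E n) = 2)
       \<and> (n \<ge> 4 \<longrightarrow> int (b_OCD (path_V n) (path_E n)) = \<lceil>real n / 3\<rceil> - 1)"
proof (intro conjI impI)
  let ?V = "path_V n" and ?E = "path_E n"
  have finE: "finite ?E" by (rule finite_pE)
  have Fne: "F \<noteq> {}" if "gamma_oc ?V (?E - F) > gamma_oc ?V ?E" for F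
    using that by auto
  have e0: "{0, Suc 0} \<in> ?E" using assms by (intro pE_in) simp
  {
    assume n3: "n \<le> 3"
    have nt: "\<not>(\<exists>j. {j,Suc j}\<in>?E \<and> {Suc j, Suc (Suc j)} \<in> ?E \<and> {Suc (Suc j), Suc(Suc(Suc j))} \<in> ?E)"
      using no_triple_small[OF _ n3] by blast
    have g1: "n \<le> gamma_oc ?V ?E + 1" using gamma_lower(2)[OF _ nt] by blast
    have g2: "gamma_oc ?V ?E + 1 \<le> n" using gamma_edge[OF _ e0] by blast
    have g: "gamma_oc ?V ?E = n - 1" using g1 g2 by linarith
    have g0: "gamma_oc ?V (?E - ?E) \<ge> n" using gamma_lower(3)[of "?E - ?E" n] by simp
    have ble: "b_OCD ?V ?E \<le> card ?E" using g g0 assms by (intro b_le) auto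
    note g g0 ble
  } note small = this
  show "b_OCD ?V ?E = 1" if n2: "n = 2"
  proof -
    have cE: "card ?E = 1"
    proof -
      have "?E = {{0,1}}"
      proof (intro equalityI subsetI)
        fix x assume "x \<in> ?E"
        then obtain i where "x = {i, Suc i}" "Suc i < n" using pE_mem by blast
        then show "x \<in> {{0,1}}" using n2 by simp
      next
        fix x assume "x \<in> {{0::nat,1}}"
        then show "x \<in> ?E" using e0 by simp
      qed
      then show ?thesis by simp
    qed
    have "1 \<le> b_OCD ?V ?E"
    proof (rule b_ge[of ?E])
      show "gamma_oc ?V (?E - ?E) > gamma_oc ?V ?E" using small n2 by simp
    next
      fix F assume "F \<subseteq> ?E" "gamma_oc ?V (?E - F) > gamma_oc ?V ?E"
      then have "F \<noteq> {}" "finite F" using Fne finite_subset[OF _ finE] by auto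
      then show "1 \<le> card F" by (simp add: Suc_le_eq card_gt_0_iff)
    qed auto
    then show ?thesis using small n2 cE by simp
  qed
  show "b_OCD ?V ?E = 2" if n3: "n = 3"
  proof -
    have Eeq: "?E = {{0,1},{1,2}}"
    proof (intro equalityI subsetI)
      fix x assume "x \<in> ?E"
      then obtain i where i: "x = {i, Suc i}" "Suc i < n" using pE_mem by blast
      then have "i = 0 \<or> i = 1" using n3 by linarith
      then show "x \<in> {{0,1},{1,2}}" using i by auto
    next
      fix x assume x: "x \<in> {{0::nat,1},{1,2}}"
      have "{1, Suc 1} \<in> ?E" using n3 by (intro pE_in) simp
      moreover have "Suc 1 = (2::nat)" by simp
      ultimately have "{1, 2::nat} \<in> ?E" by metis
      then show "x \<in> ?E" using e0 x by auto
    qed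
    have ne: "{0::nat,1} \<notin> {{1,2}}" by (simp add: doubleton_eq_iff)
    have c1: "card {{0::nat,1},{1,2}} = Suc (card {{1::nat,2}})" by (rule card_insert_disjoint[OF _ ne]) simp
    have cE: "card ?E = 2" unfolding Eeq c1 by simp
    have sm: "gamma_oc ?V ?E = 2" "gamma_oc ?V (?E - ?E) \<ge> 3" "b_OCD ?V ?E \<le> card ?E"
      using small n3 by simp_all
    have "2 \<le> b_OCD ?V ?E"
    proof (rule b_ge[of ?E])
      show "?E \<subseteq> ?E" by (rule subset_refl)
      show "gamma_oc ?V (?E - ?E) > gamma_oc ?V ?E" using sm by linarith
    next
      fix F assume FE: "F \<subseteq> ?E" and gt: "gamma_oc ?V (?E - F) > gamma_oc ?V ?E"
      have finF: "finite F" using finite_subset[OF FE finE] .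
      show "2 \<le> card F"
      proof (rule ccontr)
        assume c: "\<not> 2 \<le> card F"
        have "\<not> ?E \<subseteq> F"
        proof
          assume "?E \<subseteq> F"
          then have "card ?E \<le> card F" by (rule card_mono[OF finF])
          then show False using c cE by linarith
        qed
        then obtain e where e: "e \<in> ?E" "e \<notin> F" by blast
        then obtain i where i: "e = {i, Suc i}" using pE_mem by blast
        have "{i, Suc i} \<in> ?E - F" using e i by blast
        then have "gamma_oc ?V (?E - F) + 1 \<le> n" by (rule gamma_edge[OF Diff_subset])
        then show False using gt sm n3 by linarith
      qed
    qed
    then show ?thesis using sm cE by linarith
  qed
  show "int (b_OCD ?V ?E) = \<lceil>real n / 3\<rceil> - 1" if n4: "n \<ge> 4"
  proof -
    define m where "m = (n - 1) div 3"
    have gE: "gamma_oc ?V ?E = n - 2"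
    proof -
      have t: "{0, Suc 0} \<in> ?E" "{Suc 0, Suc (Suc 0)} \<in> ?E" "{Suc (Suc 0), Suc (Suc (Suc 0))} \<in> ?E"
        using n4 by (auto intro!: pE_in)
      have "gamma_oc ?V ?E + 2 \<le> n" by (rule gamma_triple[OF subset_refl t])
      moreover have "n \<le> gamma_oc ?V ?E + 2" using gamma_lower(1)[OF subset_refl] .
      ultimately show ?thesis by linarith
    qed
    have m3: "3 * m \<le> n - 1" unfolding m_def by simp
    have km: "3*k+3 < n" if "k < m" for k
    proof -
      have "Suc k \<le> m" using that by simp
      then have "3*k+3 \<le> 3 * m" by linarith
      then show ?thesis using m3 n4 by linarith
    qed
    define F1 where "F1 = (\<lambda>k. {3*k+2, 3*k+3}) ` {..<m}"
    have F1E: "F1 \<subseteq> ?E"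
    proof
      fix e assume "e \<in> F1"
      then obtain k where k: "k < m" "e = {3*k+2, 3*k+3}" unfolding F1_def by blast
      have "Suc (3*k+2) < n" using km[OF k(1)] by simp
      from pE_in[OF this] have "{3*k+2, Suc (3*k+2)} \<in> ?E" .
      moreover have "Suc (3*k+2) = 3*k+3" by simp
      ultimately show "e \<in> ?E" using k(2) by metis
    qed
    have cF1: "card F1 = m" unfolding F1_def
      by (subst card_image) (auto simp: inj_on_def doubleton_eq_iff)
    have inF1: "{i, Suc i} \<in> F1" if "i mod 3 = 2" "Suc i < n" for i
    proof -
      define q where "q = i div 3"
      have iq: "i = 3*q+2" unfolding q_def using that(1) by presburger
      have "(3*q+3) div 3 \<le> (n - 1) div 3" by (rule div_le_mono) (use that(2) iq in linarith)
      then have "q < m" unfolding m_def by simp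
      moreover have "{i, Suc i} = {3*q+2, 3*q+3}"
      proof -
        have e1: "Suc i = 3*q+3" using iq by linarith
        have "{i, Suc i} = {3*q+2, Suc i}" using iq by (rule arg_cong)
        also have "\<dots> = {3*q+2, 3*q+3}" using e1 by (rule arg_cong)
        finally show ?thesis .
      qed
      ultimately show ?thesis unfolding F1_def by blast
    qed
    have nt: "\<not>(\<exists>j. {j,Suc j}\<in>?E-F1 \<and> {Suc j, Suc (Suc j)} \<in> ?E-F1 \<and> {Suc (Suc j), Suc(Suc(Suc j))} \<in> ?E-F1)"
    proof
      assume "\<exists>j. {j,Suc j}\<in>?E-F1 \<and> {Suc j, Suc (Suc j)} \<in> ?E-F1 \<and> {Suc (Suc j), Suc(Suc(Suc j))} \<in> ?E-F1"
      then obtain j where t: "{j,Suc j}\<in>?E-F1" "{Suc j, Suc (Suc j)} \<in> ?E-F1" "{Suc (Suc j), Suc(Suc(Suc j))} \<in> ?E-F1"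
        by blast
      have lt: "Suc (Suc (Suc j)) < n" using t(3) pE_pair by blast
      have "j mod 3 = 2 \<or> Suc j mod 3 = 2 \<or> Suc (Suc j) mod 3 = 2" by presburger
      then show False
      proof (elim disjE)
        assume h: "j mod 3 = 2"
        have "Suc j < n" using lt by linarith
        then have "{j, Suc j} \<in> F1" using inF1 h by blast
        then show False using t(1) by blast
      next
        assume h: "Suc j mod 3 = 2"
        have "Suc (Suc j) < n" using lt by linarith
        then have "{Suc j, Suc (Suc j)} \<in> F1" using inF1 h by blast
        then show False using t(2) by blast
      next
        assume h: "Suc (Suc j) mod 3 = 2"
        then have "{Suc (Suc j), Suc (Suc (Suc j))} \<in> F1" using inF1 lt by blast
        then show False using t(3) by blast
      qed
    qed
    have gF1: "gamma_oc ?V (?E - F1) > gamma_oc ?V ?E"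
    proof -
      have "n \<le> gamma_oc ?V (?E - F1) + 1" by (rule gamma_lower(2)[OF Diff_subset nt])
      then show ?thesis using gE n4 by linarith
    qed
    have ble: "b_OCD ?V ?E \<le> m" using b_le[OF F1E gF1] cF1 by simp
    have bge: "m \<le> b_OCD ?V ?E"
    proof (rule b_ge[OF F1E gF1])
      fix F assume FE: "F \<subseteq> ?E" and gt: "gamma_oc ?V (?E - F) > gamma_oc ?V ?E"
      have finF: "finite F" using finite_subset[OF FE finE] .
      have "{..<m} \<subseteq> (\<lambda>e. Min e div 3) ` F"
      proof
        fix k assume "k \<in> {..<m}"
        then have lt: "3*k+3 < n" using km by simp
        have ed: "{3*k, Suc (3*k)} \<in> ?E" "{Suc (3*k), Suc (Suc (3*k))} \<in> ?E"
          "{Suc (Suc (3*k)), Suc (Suc (Suc (3*k)))} \<in> ?E" using lt by (auto intro!: pE_in)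
        have mn: "Min {3*k, Suc (3*k)} div 3 = k" "Min {Suc (3*k), Suc (Suc (3*k))} div 3 = k"
          "Min {Suc (Suc (3*k)), Suc (Suc (Suc (3*k)))} div 3 = k" by (simp_all add: min_def)
        show "k \<in> (\<lambda>e. Min e div 3) ` F"
        proof (rule ccontr)
          assume nk: "k \<notin> (\<lambda>e. Min e div 3) ` F"
          have "{3*k, Suc (3*k)} \<notin> F" using nk mn(1) by (metis image_eqI)
          moreover have "{Suc (3*k), Suc (Suc (3*k))} \<notin> F" using nk mn(2) by (metis image_eqI)
          moreover have "{Suc (Suc (3*k)), Suc (Suc (Suc (3*k)))} \<notin> F" using nk mn(3) by (metis image_eqI)
          ultimately have t: "{3*k, Suc (3*k)} \<in> ?E - F" "{Suc (3*k), Suc (Suc (3*k))} \<in> ?E - F"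
            "{Suc (Suc (3*k)), Suc (Suc (Suc (3*k)))} \<in> ?E - F" using ed by blast+
          have "gamma_oc ?V (?E - F) + 2 \<le> n" by (rule gamma_triple[OF Diff_subset t])
          then show False using gt gE by linarith
        qed
      qed
      then have "card {..<m} \<le> card ((\<lambda>e. Min e div 3) ` F)" by (rule card_mono[rotated]) (simp add: finF)
      also have "\<dots> \<le> card F" by (rule card_image_le[OF finF])
      finally show "m \<le> card F" by simp
    qed
    have "b_OCD ?V ?E = m" using ble bge by simp
    then show ?thesis using ceil_lemma[of n] n4 unfolding m_def by simp
  qed
qed

end
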